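(* Structural embeddings with $\mathrm{LPE}$ as node-level positional encoding and embedding dimension $d$ are sufficiently node- and adjacency-identifying, irrespective of whether the underlying Laplacian is normalized or not. Further, for graphs with $n$ nodes, the statement holds for $d\ge 2n+1$.
   Context: Graphs $G$ are finite, undirected, without self-loops and without isolated nodes, with $n$ nodes, adjacency matrix $\mathbf{A}(G)$, degree matrix $\mathbf{D}$. Laplacian $\mathbf{L}=\mathbf{D}-\mathbf{A}(G)$; normalized Laplacian $\mathbf{I}-\mathbf{D}^{-1/2}\mathbf{A}(G)\mathbf{D}^{-1/2}$. Let $\lambda=(\lambda_1,\dots,\lambda_l)^T$ be the $l$ smallest (possibly repeated) eigenvalues and $\mathbf{V}\in\mathbb{R}^{n\times l}$ corresponding orthonormal eigenvectors as columns. $\mathrm{LPE}(\mathbf{V},\lambda)=\rho\big([\phi(\mathbf{V}^T_1,\lambda+\epsilon)\cdots\phi(\mathbf{V}^T_n,\lambda+\epsilon)]\big)$, with $\epsilon\in\mathbb{R}^l$ a learnable zero-initialized vector, $\phi\colon\mathbb{R}^2\to\mathbb{R}^d$ an FFN applied to each pair $(\mathbf{V}_{ij},\lambda_j+\epsilon_j)$, and $\rho\colon\mathbb{R}^{l\times d}\to\mathbb{R}^d$ a permutation-equivariant network applied per node (e.g. sum followed by an FFN), giving $\mathrm{emb}_{PE}(v)$ per node. Structural embeddings: $\mathbf{P}(v)=\mathsf{FFN}(\mathrm{emb}_{\deg}(v)+\mathrm{emb}_{PE}(v))\in\mathbb{R}^d$, $\mathrm{emb}_{\deg}$ a learnable degree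 embedding, $\mathsf{FFN}$ an MLP. For $\mathbf{P}\in\mathbb{R}^{n\times d}$ and $\mathbf{W}^Q,\mathbf{W}^K\in\mathbb{R}^{d\times d}$ let $\tilde{\mathbf{P}}=\frac{1}{\sqrt{d_k}}\mathbf{P}\mathbf{W}^Q(\mathbf{P}\mathbf{W}^K)^T$. $\mathbf{P}$ is node-identifying if for some $\mathbf{W}^Q,\mathbf{W}^K$: $\tilde{\mathbf{P}}_{ij}=\max_k\tilde{\mathbf{P}}_{ik}\iff i=j$; adjacency-identifying if for some $\mathbf{W}^Q,\mathbf{W}^K$: $\tilde{\mathbf{P}}_{ij}=\max_k\tilde{\mathbf{P}}_{ik}\iff\mathbf{A}(G)_{ij}=1$. Parametrized structural embeddings are sufficiently node-identifying (resp. adjacency-identifying) if there is a node-identifying (resp. adjacency-identifying) $\mathbf{P}$ such that for every $\varepsilon>0$ some parameter choice yields embeddings $\mathbf{Q}$ with $\|\mathbf{P}-\mathbf{Q}\|_F<\varepsilon$. *)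

theory Defs
  imports Complex_Main "Jordan_Normal_Form.Matrix"
begin

definition is_graph :: "nat \<Rightarrow> real mat \<Rightarrow> bool" where
  "is_graph n A \<longleftrightarrow> A \<in> carrier_mat n n
     \<and> (\<forall>i<n. \<forall>j<n. A $$ (i,j) = 0 \<or> A $$ (i,j) = 1)
     \<and> (\<forall>i<n. \<forall>j<n. A $$ (i,j) = A $$ (j,i))
     \<and> (\<forall>i<n. A $$ (i,i) = 0)
     \<and> (\<forall>i<n. \<exists>j<n. A $$ (i,j) = 1)"

definition gdeg :: "real mat \<Rightarrow> nat \<Rightarrow> nat" where
  "gdeg A i = card {j. j < dim_row A \<and> A $$ (i,j) = 1}"

definition laplacian :: "real mat \<Rightarrow> real mat" where
  "laplacian A = mat (dim_row A) (dim_row A)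
     (\<lambda>(i,j). (if i = j then real (gdeg A i) else 0) - A $$ (i,j))"

definition norm_laplacian :: "real mat \<Rightarrow> real mat" where
  "norm_laplacian A = mat (dim_row A) (dim_row A)
     (\<lambda>(i,j). (if i = j then 1 else 0)
        - A $$ (i,j) / (sqrt (real (gdeg A i)) * sqrt (real (gdeg A j))))"

definition lap :: "bool \<Rightarrow> real mat \<Rightarrow> real mat" where
  "lap normalized A = (if normalized then norm_laplacian A else laplacian A)"

definition diag_of :: "real vec \<Rightarrow> real mat" where
  "diag_of v = mat (dim_vec v) (dim_vec v) (\<lambda>(i,j). if i = j then v $ i else 0)"

(* V (n x l) has orthonormal columns which are eigenvectors of L for the eigenvalues
   lam (in ascending order), and lam are the l smallest eigenvalues (with multiplicity) *)
definition is_eigdecomp :: "real mat \<Rightarrow> nat \<Rightarrow> real mat \<Rightarrow> real vec \<Rightarrow> bool" where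
  "is_eigdecomp L l V lam \<longleftrightarrow> (let n = dim_row L in
       V \<in> carrier_mat n l \<and> lam \<in> carrier_vec l \<and> l \<le> n
     \<and> transpose_mat V * V = 1\<^sub>m l
     \<and> L * V = V * diag_of lam
     \<and> (\<forall>i j. i \<le> j \<longrightarrow> j < l \<longrightarrow> lam $ i \<le> lam $ j)
     \<and> (\<forall>x. x \<in> carrier_vec n \<longrightarrow> x \<noteq> 0\<^sub>v n \<longrightarrow>
           (\<forall>i<l. x \<bullet> col V i = 0) \<longrightarrow> (\<forall>\<mu>. L *\<^sub>v x = \<mu> \<cdot>\<^sub>v x \<longrightarrow>
             (\<forall>i<l. lam $ i \<le> \<mu>))))"

definition relu :: "real vec \<Rightarrow> real vec" where
  "relu v = map_vec (\<lambda>t. max 0 t) v"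

fun mlp_eval :: "(real mat \<times> real vec) list \<Rightarrow> real vec \<Rightarrow> real vec" where
  "mlp_eval [] x = x"
| "mlp_eval [(W,b)] x = W *\<^sub>v x + b"
| "mlp_eval ((W,b) # rest) x = mlp_eval rest (relu (W *\<^sub>v x + b))"

fun mlp_wf :: "(real mat \<times> real vec) list \<Rightarrow> nat \<Rightarrow> nat \<Rightarrow> bool" where
  "mlp_wf [] din dout = False"
| "mlp_wf [(W,b)] din dout = (W \<in> carrier_mat dout din \<and> b \<in> carrier_vec dout)"
| "mlp_wf ((W,b) # rest) din dout =
     (\<exists>h. W \<in> carrier_mat h din \<and> b \<in> carrier_vec h \<and> mlp_wf rest h dout)"

(* emb_PE(v) = rho([phi(V_v1, lam_1+eps_1) ... phi(V_vl, lam_l+eps_l)]),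
   with rho = sum over the l rows followed by an FFN *)
definition lpe_emb :: "nat \<Rightarrow> (real mat \<times> real vec) list \<Rightarrow> (real mat \<times> real vec) list
      \<Rightarrow> real vec \<Rightarrow> real mat \<Rightarrow> real vec \<Rightarrow> nat \<Rightarrow> real vec" where
  "lpe_emb d phi rho eps V lam v =
     mlp_eval rho (vec d (\<lambda>k. \<Sum>j<dim_col V.
        mlp_eval phi (vec 2 (\<lambda>t. if t = 0 then V $$ (v,j) else lam $ j + eps $ j)) $ k))"

definition struct_emb :: "nat \<Rightarrow> real mat \<Rightarrow> real mat \<Rightarrow> real vec
      \<Rightarrow> (real mat \<times> real vec) list \<Rightarrow> (real mat \<times> real vec) list \<Rightarrow> real vec
      \<Rightarrow> (nat \<Rightarrow> real vec) \<Rightarrow> (real mat \<times> real vec) list \<Rightarrow> real mat" where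
  "struct_emb d A V lam phi rho eps degemb ffn =
     mat (dim_row A) d (\<lambda>(v,k).
        mlp_eval ffn (degemb (gdeg A v) + lpe_emb d phi rho eps V lam v) $ k)"

definition lpe_params_wf :: "nat \<Rightarrow> nat \<Rightarrow> (real mat \<times> real vec) list \<Rightarrow> (real mat \<times> real vec) list
      \<Rightarrow> real vec \<Rightarrow> (nat \<Rightarrow> real vec) \<Rightarrow> (real mat \<times> real vec) list \<Rightarrow> bool" where
  "lpe_params_wf d l phi rho eps degemb ffn \<longleftrightarrow>
     mlp_wf phi 2 d \<and> mlp_wf rho d d \<and> eps \<in> carrier_vec l
     \<and> (\<forall>k. degemb k \<in> carrier_vec d) \<and> mlp_wf ffn d d"

definition ptilde :: "real mat \<Rightarrow> real mat \<Rightarrow> real mat \<Rightarrow> real mat" where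
  "ptilde P WQ WK = (1 / sqrt (real (dim_col P))) \<cdot>\<^sub>m ((P * WQ) * transpose_mat (P * WK))"

definition row_max :: "real mat \<Rightarrow> nat \<Rightarrow> real" where
  "row_max M i = Max {M $$ (i,k) | k. k < dim_col M}"

definition node_identifying :: "real mat \<Rightarrow> bool" where
  "node_identifying P \<longleftrightarrow> (\<exists>WQ WK. WQ \<in> carrier_mat (dim_col P) (dim_col P)
     \<and> WK \<in> carrier_mat (dim_col P) (dim_col P)
     \<and> (\<forall>i<dim_row P. \<forall>j<dim_row P.
          ptilde P WQ WK $$ (i,j) = row_max (ptilde P WQ WK) i \<longleftrightarrow> i = j))"

definition adjacency_identifying :: "real mat \<Rightarrow> real mat \<Rightarrow> bool" where
  "adjacency_identifying A P \<longleftrightarrow> (\<exists>WQ WK. WQ \<in> carrier_mat (dim_col P) (dim_col P)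
     \<and> WK \<in> carrier_mat (dim_col P) (dim_col P)
     \<and> (\<forall>i<dim_row P. \<forall>j<dim_row P.
          ptilde P WQ WK $$ (i,j) = row_max (ptilde P WQ WK) i \<longleftrightarrow> A $$ (i,j) = 1))"

definition frob_norm :: "real mat \<Rightarrow> real" where
  "frob_norm M = sqrt (\<Sum>i<dim_row M. \<Sum>j<dim_col M. (M $$ (i,j))\<^sup>2)"

definition sufficiently :: "(real mat \<Rightarrow> bool) \<Rightarrow> nat \<Rightarrow> real mat \<Rightarrow> real mat \<Rightarrow> real vec \<Rightarrow> bool" where
  "sufficiently Prop d A V lam \<longleftrightarrow>
     (\<exists>P. P \<in> carrier_mat (dim_row A) d \<and> Prop P \<and>
        (\<forall>e>0. \<exists>phi rho eps degemb ffn.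
           lpe_params_wf d (dim_col V) phi rho eps degemb ffn
           \<and> frob_norm (P - struct_emb d A V lam phi rho eps degemb ffn) < e))"

end

theory Submission
  imports Defs "Jordan_Normal_Form.Determinant"
begin

definition W1 :: "nat \<Rightarrow> real mat" where "W1 n = mat (n+1) 2 (\<lambda>(h,t). if t = 0 then 1 else 4)"
definition b1 :: "nat \<Rightarrow> real vec" where "b1 n = vec (n+1) (\<lambda>h. 2 - 4 * real h)"
definition W2 :: "nat \<Rightarrow> nat \<Rightarrow> real mat" where "W2 n d = mat d (n+1)
   (\<lambda>(k,h). if k < n \<and> h = k then 1 else if k < n \<and> h = Suc k then -1 else 0)"
definition phiP :: "nat \<Rightarrow> nat \<Rightarrow> (real mat \<times> real vec) list" where
  "phiP n d = [(W1 n, b1 n), (W2 n d, 0\<^sub>v d)]"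

lemma phi_eval:
  assumes "k < d" "\<bar>x\<bar> \<le> 1" "j < n"
  shows "mlp_eval (phiP n d) (vec 2 (\<lambda>t. if t = 0 then x else real j)) $ k
     = (if k < n then (if j = k then x + 2 else if k < j then 4 else 0) else 0)"
proof -
  define r where "r = relu (W1 n *\<^sub>v vec 2 (\<lambda>t. if t = 0 then x else real j) + b1 n)"
  have rd: "dim_vec r = n+1" by (simp add: r_def relu_def W1_def b1_def)
  have rh: "r $ h = max 0 (x + 4 * real j + 2 - 4 * real h)" if "h < n+1" for h
    using that by (simp add: r_def relu_def W1_def b1_def scalar_prod_def row_def
        numeral_2_eq_2 lessThan_Suc)
  have ev: "mlp_eval (phiP n d) (vec 2 (\<lambda>t. if t = 0 then x else real j)) = W2 n d *\<^sub>v r + 0\<^sub>v d"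
    by (simp add: phiP_def r_def)
  have "(W2 n d *\<^sub>v r) $ k = (\<Sum>h<n+1. (if k < n \<and> h = k then 1 else if k < n \<and> h = Suc k then -1 else 0) * r $ h)"
    using assms(1) rd by (simp add: W2_def scalar_prod_def row_def lessThan_atLeast0)
  also have "\<dots> = (if k < n then r $ k - r $ Suc k else 0)"
  proof (cases "k < n")
    case True
    have "(\<Sum>h<n+1. (if k < n \<and> h = k then 1 else if k < n \<and> h = Suc k then -1 else 0) * r $ h)
       = (\<Sum>h<n+1. (if h = k then r $ h else 0) + (if h = Suc k then - r $ h else 0))"
      using True by (intro sum.cong) auto
    also have "\<dots> = r $ k - r $ Suc k" using True by (simp add: sum.distrib)
    finally show ?thesis using True by simp
  qed simp
  finally have e: "(W2 n d *\<^sub>v r) $ k = (if k < n then r $ k - r $ Suc k else 0)" .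
  show ?thesis
  proof (cases "k < n")
    case True
    have "r $ k - r $ Suc k = (if j = k then x + 2 else if k < j then 4 else 0)"
      using True assms rh[of k] rh[of "Suc k"] by (auto simp: max_def)
    then show ?thesis using e ev assms(1) True by (simp add: W2_def)
  qed (use e ev assms(1) in \<open>simp add: W2_def\<close>)
qed

lemma sum_shape:
  fixes f :: "nat \<Rightarrow> real"
  assumes "k < n"
  shows "(\<Sum>j<n. if j = k then f k + 2 else if k < j then 4 else 0) = f k + (2 + 4 * (real n - 1 - real k))"
proof -
  have "(\<Sum>j<n. if j = k then f k + 2 else if k < j then 4 else 0)
      = (\<Sum>j<n. (if j = k then f k + 2 else 0) + (if k < j then 4 else 0))"
    by (intro sum.cong) auto
  also have "\<dots> = f k + 2 + (\<Sum>j\<in>{Suc k..<n}. 4)"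
  proof -
    have "{0..<n} \<inter> Collect ((<) k) = {Suc k..<n}" by auto
    then show ?thesis using assms by (simp add: sum.distrib sum.If_cases lessThan_atLeast0)
  qed
  also have "\<dots> = f k + (2 + 4 * (real n - 1 - real k))" using assms by (simp add: of_nat_diff)
  finally show ?thesis .
qed

definition PV :: "nat \<Rightarrow> nat \<Rightarrow> real mat \<Rightarrow> real mat" where
  "PV n d V = mat n d (\<lambda>(i,k). if k < n then V $$ (i,k) else 0)"

definition cv :: "nat \<Rightarrow> nat \<Rightarrow> real vec" where
  "cv n d = vec d (\<lambda>k. if k < n then -(2 + 4 * (real n - 1 - real k)) else 0)"

lemma struct_exact:
  assumes "dim_row A = n" "dim_col V = n" "lam \<in> carrier_vec n"
    and bnd: "\<And>i j. i < n \<Longrightarrow> j < n \<Longrightarrow> \<bar>V $$ (i,j)\<bar> \<le> 1"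
  shows "struct_emb d A V lam (phiP n d) [(1\<^sub>m d, 0\<^sub>v d)] (vec n (\<lambda>j. real j - lam $ j))
          (\<lambda>_. 0\<^sub>v d) [(1\<^sub>m d, cv n d)] = PV n d V"
proof (rule eq_matI)
  show "dim_row (struct_emb d A V lam (phiP n d) [(1\<^sub>m d, 0\<^sub>v d)] (vec n (\<lambda>j. real j - lam $ j))
          (\<lambda>_. 0\<^sub>v d) [(1\<^sub>m d, cv n d)]) = dim_row (PV n d V)"
    using assms by (simp add: struct_emb_def PV_def)
  show "dim_col (struct_emb d A V lam (phiP n d) [(1\<^sub>m d, 0\<^sub>v d)] (vec n (\<lambda>j. real j - lam $ j))
          (\<lambda>_. 0\<^sub>v d) [(1\<^sub>m d, cv n d)]) = dim_col (PV n d V)"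
    by (simp add: struct_emb_def PV_def)
  fix i k assume i: "i < dim_row (PV n d V)" and k: "k < dim_col (PV n d V)"
  then have i': "i < n" and k': "k < d" by (auto simp: PV_def)
  have inner: "(\<Sum>j<n. mlp_eval (phiP n d) (vec 2 (\<lambda>t. if t = 0 then V $$ (i,j)
        else lam $ j + vec n (\<lambda>j. real j - lam $ j) $ j)) $ k)
     = (if k < n then V $$ (i,k) + (2 + 4 * (real n - 1 - real k)) else 0)"
  proof -
    have "(\<Sum>j<n. mlp_eval (phiP n d) (vec 2 (\<lambda>t. if t = 0 then V $$ (i,j)
        else lam $ j + vec n (\<lambda>j. real j - lam $ j) $ j)) $ k)
      = (\<Sum>j<n. if k < n then (if j = k then V $$ (i,k) + 2 else if k < j then 4 else 0) else 0)"
    proof (intro sum.cong refl)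
      fix j assume j: "j \<in> {..<n}"
      have "vec 2 (\<lambda>t. if t = 0 then V $$ (i,j) else lam $ j + vec n (\<lambda>j. real j - lam $ j) $ j)
          = vec 2 (\<lambda>t. if t = 0 then V $$ (i,j) else real j)" using j by auto
      then show "mlp_eval (phiP n d) (vec 2 (\<lambda>t. if t = 0 then V $$ (i,j)
        else lam $ j + vec n (\<lambda>j. real j - lam $ j) $ j)) $ k
        = (if k < n then (if j = k then V $$ (i,k) + 2 else if k < j then 4 else 0) else 0)"
        using phi_eval[OF k' bnd[OF i'] , of j] j by auto
    qed
    also have "\<dots> = (if k < n then V $$ (i,k) + (2 + 4 * (real n - 1 - real k)) else 0)"
      using sum_shape[of k n "\<lambda>k. V $$ (i,k)"] by auto
    finally show ?thesis .
  qed
  show "struct_emb d A V lam (phiP n d) [(1\<^sub>m d, 0\<^sub>v d)] (vec n (\<lambda>j. real j - lam $ j))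
          (\<lambda>_. 0\<^sub>v d) [(1\<^sub>m d, cv n d)] $$ (i,k) = PV n d V $$ (i,k)"
    using i' k' assms(1,2) inner
    by (simp add: struct_emb_def PV_def lpe_emb_def cv_def)
qed


lemma VVt:
  fixes V :: "real mat"
  assumes V: "V \<in> carrier_mat n n" and o: "transpose_mat V * V = 1\<^sub>m n"
  shows "V * transpose_mat V = 1\<^sub>m n"
  using mat_mult_left_right_inverse[of "transpose_mat V" n V] o V by simp

lemma Vbnd:
  fixes V :: "real mat"
  assumes V: "V \<in> carrier_mat n n" and o: "transpose_mat V * V = 1\<^sub>m n"
    and "i < n" "j < n"
  shows "\<bar>V $$ (i,j)\<bar> \<le> 1"
proof -
  have "(transpose_mat V * V) $$ (j,j) = 1" using o assms by simp
  moreover have "(transpose_mat V * V) $$ (j,j) = (\<Sum>t<n. V $$ (t,j) * V $$ (t,j))"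
    using V assms(3,4) by (simp add: scalar_prod_def row_def col_def lessThan_atLeast0)
  ultimately have s: "(\<Sum>t<n. V $$ (t,j) * V $$ (t,j)) = 1" by simp
  have "V $$ (i,j) * V $$ (i,j) \<le> (\<Sum>t<n. V $$ (t,j) * V $$ (t,j))"
    by (rule member_le_sum) (use assms in auto)
  then have "(V $$ (i,j))\<^sup>2 \<le> 1\<^sup>2" using s by (simp add: power2_eq_square)
  then show ?thesis by (simp add: abs_square_le_1)
qed

lemma PPt:
  assumes V: "V \<in> carrier_mat n n" and o: "transpose_mat V * V = 1\<^sub>m n" and "n \<le> d"
  shows "PV n d V * transpose_mat (PV n d V) = 1\<^sub>m n"
proof (rule eq_matI)
  fix i j assume "i < dim_row (1\<^sub>m n :: real mat)" "j < dim_col (1\<^sub>m n :: real mat)"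
  then have ij: "i < n" "j < n" by auto
  have "(PV n d V * transpose_mat (PV n d V)) $$ (i,j) = (\<Sum>k<d. (if k < n then V $$ (i,k) else 0) * (if k < n then V $$ (j,k) else 0))"
    using ij by (simp add: PV_def scalar_prod_def row_def col_def lessThan_atLeast0)
  also have "\<dots> = (\<Sum>k<n. V $$ (i,k) * V $$ (j,k))"
  proof -
    have "(\<Sum>k<d. (if k < n then V $$ (i,k) else 0) * (if k < n then V $$ (j,k) else 0))
        = (\<Sum>k<d. if k < n then V $$ (i,k) * V $$ (j,k) else 0)" by (intro sum.cong) auto
    also have "\<dots> = (\<Sum>k\<in>{..<d} \<inter> {k. k < n}. V $$ (i,k) * V $$ (j,k))"
      by (simp add: sum.If_cases)
    also have "{..<d} \<inter> {k. k < n} = {..<n}" using assms(3) by auto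
    finally show ?thesis .
  qed
  also have "\<dots> = (V * transpose_mat V) $$ (i,j)"
    using ij V by (simp add: scalar_prod_def row_def col_def lessThan_atLeast0)
  also have "\<dots> = 1\<^sub>m n $$ (i,j)" using VVt[OF V o] by simp
  finally show "(PV n d V * transpose_mat (PV n d V)) $$ (i,j) = 1\<^sub>m n $$ (i,j)" .
qed (auto simp: PV_def)

lemma rowmax_c:
  fixes c :: real
  assumes "c > 0" "dim_col M = n" "\<exists>k<n. M $$ (i,k) = c" "\<And>k. k < n \<Longrightarrow> M $$ (i,k) = c \<or> M $$ (i,k) = 0"
  shows "row_max M i = c"
  unfolding row_max_def
proof (rule Max_eqI)
  show "finite {M $$ (i, k) |k. k < dim_col M}" by simp
  show "y \<le> c" if "y \<in> {M $$ (i, k) |k. k < dim_col M}" for y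
    using that assms by force
  show "c \<in> {M $$ (i, k) |k. k < dim_col M}" using assms by force
qed

lemma node_id:
  assumes V: "V \<in> carrier_mat n n" and o: "transpose_mat V * V = 1\<^sub>m n" and "n \<le> d" "0 < d"
  shows "node_identifying (PV n d V)"
  unfolding node_identifying_def
proof (intro exI conjI allI impI)
  let ?P = "PV n d V"
  have dc: "dim_col ?P = d" "dim_row ?P = n" by (auto simp: PV_def)
  show "1\<^sub>m d \<in> carrier_mat (dim_col ?P) (dim_col ?P)" using dc by simp
  show "1\<^sub>m d \<in> carrier_mat (dim_col ?P) (dim_col ?P)" using dc by simp
  define c where "c = 1 / sqrt (real d)"
  have c: "c > 0" using assms(4) by (simp add: c_def)
  have pt: "ptilde ?P (1\<^sub>m d) (1\<^sub>m d) = c \<cdot>\<^sub>m 1\<^sub>m n"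
    unfolding ptilde_def c_def using dc PPt[OF V o assms(3)] by simp
  fix i j assume ij: "i < dim_row ?P" "j < dim_row ?P"
  then have ij': "i < n" "j < n" using dc by auto
  have rm: "row_max (ptilde ?P (1\<^sub>m d) (1\<^sub>m d)) i = c"
    unfolding pt by (rule rowmax_c[OF c]) (use ij' in \<open>auto split: if_splits\<close>)
  show "(ptilde ?P (1\<^sub>m d) (1\<^sub>m d) $$ (i, j) = row_max (ptilde ?P (1\<^sub>m d) (1\<^sub>m d)) i) = (i = j)"
    unfolding rm using c ij' by (simp add: pt)
qed

lemma adj_id:
  assumes V: "V \<in> carrier_mat n n" and o: "transpose_mat V * V = 1\<^sub>m n" and "n \<le> d" "0 < d"
    and G: "is_graph n A"
  shows "adjacency_identifying A (PV n d V)"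
  unfolding adjacency_identifying_def
proof (intro exI conjI allI impI)
  let ?P = "PV n d V"
  have dc: "dim_col ?P = d" "dim_row ?P = n" by (auto simp: PV_def)
  have Pc: "?P \<in> carrier_mat n d" by (simp add: PV_def)
  have Ac: "A \<in> carrier_mat n n" using G by (simp add: is_graph_def)
  show "transpose_mat ?P * A * ?P \<in> carrier_mat (dim_col ?P) (dim_col ?P)" using dc Ac Pc by auto
  show "1\<^sub>m d \<in> carrier_mat (dim_col ?P) (dim_col ?P)" using dc by simp
  define c where "c = 1 / sqrt (real d)"
  have c: "c > 0" using assms(4) by (simp add: c_def)
  have PP: "?P * transpose_mat ?P = 1\<^sub>m n" using PPt[OF V o assms(3)] .
  have Ptc: "transpose_mat ?P \<in> carrier_mat d n" using Pc by simp
  have X: "transpose_mat ?P * A * ?P \<in> carrier_mat d d" using Ptc Ac Pc by auto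
  have PtA: "transpose_mat ?P * A \<in> carrier_mat d n" using Ptc Ac by auto
  have "?P * (transpose_mat ?P * A * ?P) * transpose_mat (?P * 1\<^sub>m d)
       = ?P * (transpose_mat ?P * A * ?P) * transpose_mat ?P" using Pc by simp
  also have "\<dots> = ?P * ((transpose_mat ?P * A * ?P) * transpose_mat ?P)"
    using assoc_mult_mat[OF Pc X Ptc] .
  also have "(transpose_mat ?P * A * ?P) * transpose_mat ?P = (transpose_mat ?P * A) * (?P * transpose_mat ?P)"
    using assoc_mult_mat[OF PtA Pc Ptc] .
  also have "?P * ((transpose_mat ?P * A) * (?P * transpose_mat ?P)) = (?P * (transpose_mat ?P * A)) * (?P * transpose_mat ?P)"
    using assoc_mult_mat[OF Pc PtA, of "?P * transpose_mat ?P" n] Pc Ptc by (metis mult_carrier_mat)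
  also have "?P * (transpose_mat ?P * A) = (?P * transpose_mat ?P) * A"
    using assoc_mult_mat[OF Pc Ptc Ac] by simp
  finally have e1: "?P * (transpose_mat ?P * A * ?P) * transpose_mat (?P * 1\<^sub>m d) = (?P * transpose_mat ?P) * A * (?P * transpose_mat ?P)" .
  have "(?P * transpose_mat ?P) * A * (?P * transpose_mat ?P) = A" using PP Ac by simp
  with e1 have eqA: "?P * (transpose_mat ?P * A * ?P) * transpose_mat (?P * 1\<^sub>m d) = A" by (rule trans)
  have pt: "ptilde ?P (transpose_mat ?P * A * ?P) (1\<^sub>m d) = c \<cdot>\<^sub>m A"
    unfolding ptilde_def c_def dc(1) eqA ..
  fix i j assume ij: "i < dim_row ?P" "j < dim_row ?P"
  then have ij': "i < n" "j < n" using dc by auto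
  have rm: "row_max (ptilde ?P (transpose_mat ?P * A * ?P) (1\<^sub>m d)) i = c"
    unfolding pt
  proof (rule rowmax_c[OF c])
    show "dim_col (c \<cdot>\<^sub>m A) = n" using Ac by simp
    obtain k where "k < n" "A $$ (i,k) = 1" using G ij' by (auto simp: is_graph_def)
    then show "\<exists>k<n. (c \<cdot>\<^sub>m A) $$ (i, k) = c" using Ac ij' by (intro exI[of _ k]) simp
    fix k assume "k < n"
    then have "A $$ (i,k) = 0 \<or> A $$ (i,k) = 1" using G ij' by (simp add: is_graph_def)
    then show "(c \<cdot>\<^sub>m A) $$ (i, k) = c \<or> (c \<cdot>\<^sub>m A) $$ (i, k) = 0"
      using Ac ij' \<open>k < n\<close> by auto
  qed
  have "A $$ (i,j) = 0 \<or> A $$ (i,j) = 1" using G ij' by (simp add: is_graph_def)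
  then show "(ptilde ?P (transpose_mat ?P * A * ?P) (1\<^sub>m d) $$ (i, j)
     = row_max (ptilde ?P (transpose_mat ?P * A * ?P) (1\<^sub>m d)) i) = (A $$ (i, j) = 1)"
    unfolding rm using c ij' Ac by (auto simp: pt)
qed


lemma params_wf: "lpe_params_wf d n (phiP n d) [(1\<^sub>m d, 0\<^sub>v d)] (vec n (\<lambda>j. real j - lam $ j))
          (\<lambda>_. 0\<^sub>v d) [(1\<^sub>m d, cv n d)]"
  unfolding lpe_params_wf_def phiP_def
  by (auto simp: W1_def b1_def W2_def cv_def intro!: exI[of _ "n+1"])

lemma frob_zero: "frob_norm (M - M) = 0"
  by (simp add: frob_norm_def)

lemma suff:
  assumes "is_graph n A" and "is_eigdecomp (lap normalized A) n V lam" and "d \<ge> 2 * n + 1"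
    and Prop: "Prop (PV n d V)"
  shows "sufficiently Prop d A V lam"
proof -
  have Ac: "A \<in> carrier_mat n n" using assms(1) by (simp add: is_graph_def)
  have dl: "dim_row (lap normalized A) = dim_row A"
    by (simp add: lap_def laplacian_def norm_laplacian_def)
  have E: "V \<in> carrier_mat n n" "lam \<in> carrier_vec n"
    using assms(2) Ac dl unfolding is_eigdecomp_def Let_def by auto
  have bnd: "\<And>i j. i < n \<Longrightarrow> j < n \<Longrightarrow> \<bar>V $$ (i,j)\<bar> \<le> 1"
  proof -
    fix i j assume "i < n" "j < n"
    moreover have "transpose_mat V * V = 1\<^sub>m n"
      using assms(2) Ac dl unfolding is_eigdecomp_def Let_def by auto
    ultimately show "\<bar>V $$ (i,j)\<bar> \<le> 1" using Vbnd[OF E(1)] by blast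
  qed
  show ?thesis
    unfolding sufficiently_def
  proof (intro exI conjI allI impI)
    show "PV n d V \<in> carrier_mat (dim_row A) d" using Ac by (simp add: PV_def)
    show "Prop (PV n d V)" by (rule Prop)
    fix e :: real assume "e > 0"
    show "lpe_params_wf d (dim_col V) (phiP n d) [(1\<^sub>m d, 0\<^sub>v d)] (vec n (\<lambda>j. real j - lam $ j))
          (\<lambda>_. 0\<^sub>v d) [(1\<^sub>m d, cv n d)]" using params_wf E by simp
    have "struct_emb d A V lam (phiP n d) [(1\<^sub>m d, 0\<^sub>v d)] (vec n (\<lambda>j. real j - lam $ j))
          (\<lambda>_. 0\<^sub>v d) [(1\<^sub>m d, cv n d)] = PV n d V"
      by (rule struct_exact) (use Ac E bnd in auto)
    then show "frob_norm (PV n d V - struct_emb d A V lam (phiP n d) [(1\<^sub>m d, 0\<^sub>v d)] (vec n (\<lambda>j. real j - lam $ j))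
          (\<lambda>_. 0\<^sub>v d) [(1\<^sub>m d, cv n d)]) < e" using \<open>e > 0\<close> frob_zero by simp
  qed
qed

theorem theoremF12:
  fixes n d :: nat and A V :: "real mat" and lam :: "real vec" and normalized :: bool
  assumes "is_graph n A"
    and "is_eigdecomp (lap normalized A) n V lam"
    and "d \<ge> 2 * n + 1"
  shows "sufficiently node_identifying d A V lam
       \<and> sufficiently (adjacency_identifying A) d A V lam"
proof -
  have Ac: "A \<in> carrier_mat n n" using assms(1) by (simp add: is_graph_def)
  have dl: "dim_row (lap normalized A) = dim_row A"
    by (simp add: lap_def laplacian_def norm_laplacian_def)
  have E: "V \<in> carrier_mat n n" "transpose_mat V * V = 1\<^sub>m n"
    using assms(2) Ac dl unfolding is_eigdecomp_def Let_def by auto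
  have nd: "n \<le> d" "0 < d" using assms(3) by auto
  show ?thesis
    using suff[OF assms, of node_identifying] suff[OF assms, of "adjacency_identifying A"]
      node_id[OF E nd] adj_id[OF E nd assms(1)] by blast
qed

end
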